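(* Let $E\subseteq\mathbb{R}$, let $\theta=(k_r)$ be a lacunary sequence, and let $f:E\to\mathbb{R}$ be Abel continuous on $E$. Then $f$ is lacunary statistically sequentially continuous on $E$ (with respect to $\theta$).
   Context: A sequence $(p_n)$ of real numbers is Abel convergent to $\ell$ if $\sum_{k=0}^{\infty}p_k x^k$ converges for every $0\le x<1$ and $\lim_{x\to 1^-}(1-x)\sum_{k=0}^{\infty}p_k x^k=\ell$. $f$ is Abel continuous on $E$ if for every sequence $(p_n)$ in $E$ Abel convergent to some $\ell\in E$, $(f(p_n))$ is Abel convergent to $f(\ell)$. A lacunary sequence is an increasing sequence $\theta=(k_r)_{r\ge0}$ of nonnegative integers with $k_0=0$, $h_r=k_r-k_{r-1}\to\infty$, and $\liminf_r k_r/k_{r-1}>1$; put $I_r=(k_{r-1},k_r]$. A sequence $(p_k)$ is lacunary statistically convergent to $\ell$ if for every $\varepsilon>0$, $\lim_{r\to\infty}\frac{1}{h_r}|\{k\in I_r:|p_k-\ell|\ge\varepsilon\}|=0$. $f$ is lacunary statistically sequentially continuous on $E$ if for every sequence $(p_n)$ in $E$ lacunary statistically convergent to some $\ell\in E$, $(f(p_n))$ is lacunary statistically convergent to $f(\ell)$. *)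

theory Defs
  imports "HOL-Analysis.Analysis" "HOL-Library.Liminf_Limsup"
begin

definition abel_convergent :: "(nat \<Rightarrow> real) \<Rightarrow> real \<Rightarrow> bool" where
  "abel_convergent p l \<longleftrightarrow>
     (\<forall>x::real. 0 \<le> x \<and> x < 1 \<longrightarrow> summable (\<lambda>k. p k * x ^ k)) \<and>
     ((\<lambda>x. (1 - x) * (\<Sum>k. p k * x ^ k)) \<longlongrightarrow> l) (at_left 1)"

definition abel_continuous_on :: "real set \<Rightarrow> (real \<Rightarrow> real) \<Rightarrow> bool" where
  "abel_continuous_on E f \<longleftrightarrow>
     (\<forall>p l. (\<forall>n. p n \<in> E) \<and> l \<in> E \<and> abel_convergent p l
        \<longrightarrow> abel_convergent (\<lambda>n. f (p n)) (f l))"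

text \<open>A lacunary sequence theta = (k r); h (Suc r) = k (Suc r) - k r, and
  I (Suc r) = {k r <.. k (Suc r)}.\<close>
definition lacunary :: "(nat \<Rightarrow> nat) \<Rightarrow> bool" where
  "lacunary k \<longleftrightarrow> strict_mono k \<and> k 0 = 0 \<and>
     filterlim (\<lambda>r. k (Suc r) - k r) at_top sequentially \<and>
     liminf (\<lambda>r. ereal (real (k (Suc r)) / real (k r))) > 1"

definition lacunary_statistically_convergent ::
  "(nat \<Rightarrow> nat) \<Rightarrow> (nat \<Rightarrow> real) \<Rightarrow> real \<Rightarrow> bool" where
  "lacunary_statistically_convergent k p l \<longleftrightarrow>
     (\<forall>\<epsilon>>0. (\<lambda>r. real (card {n \<in> {k r<..k (Suc r)}. \<bar>p n - l\<bar> \<ge> \<epsilon>})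
                 / real (k (Suc r) - k r)) \<longlonglongrightarrow> 0)"

definition lacunary_stat_seq_continuous_on ::
  "(nat \<Rightarrow> nat) \<Rightarrow> real set \<Rightarrow> (real \<Rightarrow> real) \<Rightarrow> bool" where
  "lacunary_stat_seq_continuous_on k E f \<longleftrightarrow>
     (\<forall>p l. (\<forall>n. p n \<in> E) \<and> l \<in> E \<and> lacunary_statistically_convergent k p l
        \<longrightarrow> lacunary_statistically_convergent k (\<lambda>n. f (p n)) (f l))"

end

theory Submission
  imports Defs
begin

lemma abel_of_fast:
  fixes s :: "nat \<Rightarrow> real"
  assumes d: "\<And>n. \<bar>s n - l\<bar> \<le> (1/2)^n"
  shows "abel_convergent s l"
proof -
  define d where "d n = s n - l" for n
  have dsum: "summable (\<lambda>k. d k * x ^ k)" and dbd: "\<bar>\<Sum>k. d k * x ^ k\<bar> \<le> 2"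
    if x: "0 \<le> x" "x < 1" for x :: real
  proof -
    have b: "norm (d k * x ^ k) \<le> (1/2)^k" for k
    proof -
      have "\<bar>x ^ k\<bar> \<le> 1" using x by (simp add: power_le_one abs_of_nonneg)
      then have "\<bar>d k\<bar> * \<bar>x^k\<bar> \<le> (1/2)^k * 1"
        using d[of k] unfolding d_def by (intro mult_mono) auto
      then show ?thesis by (simp add: abs_mult)
    qed
    have sg: "summable (\<lambda>k. (1/2::real)^k)" by (rule summable_geometric) simp
    show s1: "summable (\<lambda>k. d k * x ^ k)"
      by (rule summable_comparison_test[OF _ sg]) (use b in auto)
    have sn: "summable (\<lambda>k. norm (d k * x ^ k))"
      by (rule summable_comparison_test[OF _ sg]) (use b in auto)
    have "\<bar>\<Sum>k. d k * x ^ k\<bar> \<le> (\<Sum>k. norm (d k * x ^ k))"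
      using summable_norm[OF sn] by simp
    also have "\<dots> \<le> (\<Sum>k. (1/2::real)^k)"
      by (rule suminf_le) (use b sn sg in auto)
    also have "\<dots> = 2" using suminf_geometric[of "1/2::real"] by simp
    finally show "\<bar>\<Sum>k. d k * x ^ k\<bar> \<le> 2" .
  qed
  have sl: "summable (\<lambda>k. l * x ^ k)" and sl2: "(\<Sum>k. l * x ^ k) = l / (1 - x)"
    if "0 \<le> x" "x < 1" for x :: real
  proof -
    have g: "(\<lambda>k. x ^ k) sums (1 / (1 - x))" using that by (intro geometric_sums) simp
    show "summable (\<lambda>k. l * x ^ k)" using sums_mult[OF g, of l] sums_summable by blast
    show "(\<Sum>k. l * x ^ k) = l / (1 - x)" using sums_mult[OF g, of l] sums_unique by fastforce
  qed
  have split: "s k * x ^ k = l * x ^ k + d k * x ^ k" for k x by (simp add: d_def algebra_simps)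
  have summ: "summable (\<lambda>k. s k * x ^ k)" if "0 \<le> x" "x < 1" for x :: real
    unfolding split using summable_add[OF sl dsum] that by simp
  have eq: "(1 - x) * (\<Sum>k. s k * x ^ k) = l + (1 - x) * (\<Sum>k. d k * x ^ k)"
    if "0 \<le> x" "x < 1" for x :: real
  proof -
    have "(\<Sum>k. s k * x ^ k) = (\<Sum>k. l * x ^ k) + (\<Sum>k. d k * x ^ k)"
      unfolding split using suminf_add[OF sl dsum] that by simp
    then show ?thesis using sl2[OF that] that by (simp add: field_simps)
  qed
  have bnd: "\<bar>(1 - x) * (\<Sum>k. s k * x ^ k) - l\<bar> \<le> 2 * (1 - x)"
    if "0 \<le> x" "x < 1" for x :: real
  proof -
    have "\<bar>(1 - x) * (\<Sum>k. s k * x ^ k) - l\<bar> = (1 - x) * \<bar>\<Sum>k. d k * x ^ k\<bar>"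
      using eq[OF that] that by (simp add: abs_mult)
    also have "\<dots> \<le> (1 - x) * 2" using dbd[OF that] that by (intro mult_left_mono) auto
    finally show ?thesis by simp
  qed
  have ev: "eventually (\<lambda>x. x \<in> {0<..<(1::real)}) (at_left 1)"
    by (rule eventually_at_left_real) simp
  have lim1: "((\<lambda>x. l - 2 * (1 - x)) \<longlongrightarrow> l) (at_left (1::real))"
    by (rule tendsto_eq_intros refl | simp)+
  have lim2: "((\<lambda>x. l + 2 * (1 - x)) \<longlongrightarrow> l) (at_left (1::real))"
    by (rule tendsto_eq_intros refl | simp)+
  have "((\<lambda>x. (1 - x) * (\<Sum>k. s k * x ^ k)) \<longlongrightarrow> l) (at_left 1)"
  proof (rule tendsto_sandwich[OF _ _ lim1 lim2])
    show "eventually (\<lambda>x. l - 2 * (1 - x) \<le> (1 - x) * (\<Sum>k. s k * x ^ k)) (at_left 1)"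
      using ev proof (rule eventually_mono)
      fix x :: real assume "x \<in> {0<..<1}"
      then have "\<bar>(1 - x) * (\<Sum>k. s k * x ^ k) - l\<bar> \<le> 2 * (1 - x)" using bnd by auto
      then show "l - 2 * (1 - x) \<le> (1 - x) * (\<Sum>k. s k * x ^ k)" by (simp add: abs_le_iff)
    qed
    show "eventually (\<lambda>x. (1 - x) * (\<Sum>k. s k * x ^ k) \<le> l + 2 * (1 - x)) (at_left 1)"
      using ev proof (rule eventually_mono)
      fix x :: real assume "x \<in> {0<..<1}"
      then have "\<bar>(1 - x) * (\<Sum>k. s k * x ^ k) - l\<bar> \<le> 2 * (1 - x)" using bnd by auto
      then show "(1 - x) * (\<Sum>k. s k * x ^ k) \<le> l + 2 * (1 - x)" by (simp add: abs_le_iff)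
    qed
  qed
  then show ?thesis unfolding abel_convergent_def using summ by blast
qed

lemma abel_lower:
  assumes "abel_convergent c L" and "\<And>n. c n \<ge> a"
  shows "L \<ge> a"
proof -
  have lim: "((\<lambda>x. (1 - x) * (\<Sum>k. c k * x ^ k)) \<longlongrightarrow> L) (at_left 1)"
    and sm: "\<And>x. 0 \<le> x \<Longrightarrow> x < 1 \<Longrightarrow> summable (\<lambda>k. c k * x ^ k)"
    using assms(1) unfolding abel_convergent_def by auto
  have ev: "eventually (\<lambda>x. x \<in> {0<..<(1::real)}) (at_left 1)"
    by (rule eventually_at_left_real) simp
  have "a \<le> (1 - x) * (\<Sum>k. c k * x ^ k)" if "0 < x" "x < 1" for x :: real
  proof -
    have g: "(\<lambda>k. a * x ^ k) sums (a * (1 / (1 - x)))"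
      using that by (intro sums_mult geometric_sums) simp
    have "a / (1 - x) \<le> (\<Sum>k. c k * x ^ k)"
      using sums_le[OF _ g summable_sums[OF sm]] that assms(2)
      by (simp add: mult_right_mono)
    then show ?thesis using that by (simp add: field_simps)
  qed
  note h = this
  have "eventually (\<lambda>x. a \<le> (1 - x) * (\<Sum>k. c k * x ^ k)) (at_left 1)"
    using ev by (rule eventually_mono) (use h in auto)
  then show ?thesis using tendsto_lowerbound[OF lim] by simp
qed

lemma abel_upper:
  assumes "abel_convergent c L" and "\<And>n. c n \<le> a"
  shows "L \<le> a"
proof -
  have lim: "((\<lambda>x. (1 - x) * (\<Sum>k. c k * x ^ k)) \<longlongrightarrow> L) (at_left 1)"
    and sm: "\<And>x. 0 \<le> x \<Longrightarrow> x < 1 \<Longrightarrow> summable (\<lambda>k. c k * x ^ k)"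
    using assms(1) unfolding abel_convergent_def by auto
  have ev: "eventually (\<lambda>x. x \<in> {0<..<(1::real)}) (at_left 1)"
    by (rule eventually_at_left_real) simp
  have "(1 - x) * (\<Sum>k. c k * x ^ k) \<le> a" if "0 < x" "x < 1" for x :: real
  proof -
    have g: "(\<lambda>k. a * x ^ k) sums (a * (1 / (1 - x)))"
      using that by (intro sums_mult geometric_sums) simp
    have "(\<Sum>k. c k * x ^ k) \<le> a / (1 - x)"
      using sums_le[OF _ summable_sums[OF sm] g] that assms(2)
      by (simp add: mult_right_mono)
    then show ?thesis using that by (simp add: field_simps)
  qed
  note h = this
  have "eventually (\<lambda>x. (1 - x) * (\<Sum>k. c k * x ^ k) \<le> a) (at_left 1)"
    using ev by (rule eventually_mono) (use h in auto)
  then show ?thesis using tendsto_upperbound[OF lim] by simp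
qed


lemma abel_cont_imp:
  assumes ac: "abel_continuous_on E f" and lE: "l \<in> E" and e: "\<epsilon> > 0"
  shows "\<exists>\<delta>>0. \<forall>y\<in>E. \<bar>y - l\<bar> < \<delta> \<longrightarrow> \<bar>f y - f l\<bar> < \<epsilon>"
proof (rule ccontr)
  assume "\<not> ?thesis"
  then have H: "\<forall>\<delta>>0. \<exists>y\<in>E. \<bar>y - l\<bar> < \<delta> \<and> \<bar>f y - f l\<bar> \<ge> \<epsilon>"
    by (metis not_less)
  have key: "False" if P: "\<forall>\<delta>>0. \<exists>y\<in>E. \<bar>y - l\<bar> < \<delta> \<and> Q (f y)"
    and QQ: "\<And>s. abel_convergent (\<lambda>n. f (s n)) (f l) \<Longrightarrow> \<forall>n. Q (f (s n)) \<Longrightarrow> False"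
    for Q
  proof -
    have "\<forall>n. \<exists>y. y \<in> E \<and> \<bar>y - l\<bar> < (1/2::real)^n \<and> Q (f y)"
      using P by (metis zero_less_divide_1_iff zero_less_numeral zero_less_power)
    then obtain s where s: "\<And>n. s n \<in> E \<and> \<bar>s n - l\<bar> < (1/2::real)^n \<and> Q (f (s n))"
      by metis
    have "abel_convergent s l" by (rule abel_of_fast) (use s in \<open>simp add: less_imp_le\<close>)
    then have "abel_convergent (\<lambda>n. f (s n)) (f l)"
      using ac lE s unfolding abel_continuous_on_def by blast
    then show False using QQ s by blast
  qed
  show False
  proof (cases "\<forall>\<delta>>0. \<exists>y\<in>E. \<bar>y - l\<bar> < \<delta> \<and> f y \<ge> f l + \<epsilon>")
    case True
    show False
    proof (rule key[OF True])
      fix s assume "abel_convergent (\<lambda>n. f (s n)) (f l)" "\<forall>n. f l + \<epsilon> \<le> f (s n)"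
      then have "f l \<ge> f l + \<epsilon>" using abel_lower by blast
      then show False using e by simp
    qed
  next
    case False
    then obtain \<delta>0 where d0: "\<delta>0 > 0" "\<And>y. y \<in> E \<Longrightarrow> \<bar>y - l\<bar> < \<delta>0 \<Longrightarrow> f y < f l + \<epsilon>"
      by (auto simp: not_le)
    have P: "\<forall>\<delta>>0. \<exists>y\<in>E. \<bar>y - l\<bar> < \<delta> \<and> f y \<le> f l - \<epsilon>"
    proof (intro allI impI)
      fix \<delta> :: real assume "\<delta> > 0"
      then obtain y where y: "y \<in> E" "\<bar>y - l\<bar> < min \<delta> \<delta>0" "\<bar>f y - f l\<bar> \<ge> \<epsilon>"
        using H d0(1) by (meson min_less_iff_conj)
      then have "f y < f l + \<epsilon>" using d0 by auto
      then have "f y \<le> f l - \<epsilon>" using y(3) by (auto simp: abs_le_iff abs_if split: if_splits)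
      then show "\<exists>y\<in>E. \<bar>y - l\<bar> < \<delta> \<and> f y \<le> f l - \<epsilon>" using y by auto
    qed
    show False
    proof (rule key[OF P])
      fix s assume "abel_convergent (\<lambda>n. f (s n)) (f l)" "\<forall>n. f (s n) \<le> f l - \<epsilon>"
      then have "f l \<le> f l - \<epsilon>" using abel_upper by blast
      then show False using e by simp
    qed
  qed
qed

theorem corollary3:
  fixes E :: "real set" and k :: "nat \<Rightarrow> nat" and f :: "real \<Rightarrow> real"
  assumes "lacunary k"
    and "abel_continuous_on E f"
  shows "lacunary_stat_seq_continuous_on k E f"
  unfolding lacunary_stat_seq_continuous_on_def
proof (intro allI impI)
  fix p l assume A: "(\<forall>n. p n \<in> E) \<and> l \<in> E \<and> lacunary_statistically_convergent k p l"
  show "lacunary_statistically_convergent k (\<lambda>n. f (p n)) (f l)"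
    unfolding lacunary_statistically_convergent_def
  proof (intro allI impI)
    fix \<epsilon> :: real assume e: "\<epsilon> > 0"
    obtain \<delta> where d: "\<delta> > 0" "\<And>y. y \<in> E \<Longrightarrow> \<bar>y - l\<bar> < \<delta> \<Longrightarrow> \<bar>f y - f l\<bar> < \<epsilon>"
      using abel_cont_imp[OF assms(2) _ e] A by blast
    have lim: "(\<lambda>r. real (card {n \<in> {k r<..k (Suc r)}. \<bar>p n - l\<bar> \<ge> \<delta>})
                 / real (k (Suc r) - k r)) \<longlonglongrightarrow> 0"
      using A d(1) unfolding lacunary_statistically_convergent_def by blast
    have sub: "{n \<in> {k r<..k (Suc r)}. \<bar>f (p n) - f l\<bar> \<ge> \<epsilon>} \<subseteq> {n \<in> {k r<..k (Suc r)}. \<bar>p n - l\<bar> \<ge> \<delta>}" for r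
      using A d(2) by (force simp: not_le[symmetric])
    have le: "real (card {n \<in> {k r<..k (Suc r)}. \<bar>f (p n) - f l\<bar> \<ge> \<epsilon>}) / real (k (Suc r) - k r)
       \<le> real (card {n \<in> {k r<..k (Suc r)}. \<bar>p n - l\<bar> \<ge> \<delta>}) / real (k (Suc r) - k r)" for r
      by (intro divide_right_mono) (use card_mono[OF _ sub[of r]] in auto)
    show "(\<lambda>r. real (card {n \<in> {k r<..k (Suc r)}. \<bar>f (p n) - f l\<bar> \<ge> \<epsilon>})
                 / real (k (Suc r) - k r)) \<longlonglongrightarrow> 0"
      by (rule tendsto_sandwich[OF _ _ tendsto_const lim]) (use le in auto)
  qed
qed

end
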